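(* Let $a>0$ and let $x$ be real with $x<a$. Then for every integer $r\ge0$, $$\psi^{(r)}(a-x)-\psi^{(r)}(a)=-\sum_{n=1}^\infty\frac1n\frac{(x)_n}{(a)_n}\,Y_r\!\left(-H_n^{(1)}(a),\,1!\,H_n^{(2)}(a),\dots,(-1)^r(r-1)!\,H_n^{(r)}(a)\right)$$ (for $r=0$ the left side is $\psi(a-x)-\psi(a)$ and $Y_0=1$), where the $j$-th argument of $Y_r$ is $(-1)^j(j-1)!\,H_n^{(j)}(a)$.
   Context: $\psi=\Gamma'/\Gamma$ is the digamma function and $\psi^{(r)}$ its $r$-th derivative. $(y)_n=y(y+1)\cdots(y+n-1)$. $H_n^{(j)}(a)=\sum_{k=0}^{n-1}(k+a)^{-j}$. Complete (exponential) Bell polynomials: $Y_0=1$ and for $r\ge1$, $Y_r(x_1,\dots,x_r)=\sum \frac{r!}{k_1!\cdots k_r!}\prod_{j=1}^r\left(\frac{x_j}{j!}\right)^{k_j}$, the sum over all tuples of nonnegative integers $(k_1,\dots,k_r)$ with $k_1+2k_2+\cdots+rk_r=r$. *)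

theory Defs
  imports "HOL-Analysis.Analysis"
begin

definition gen_harm :: "nat \<Rightarrow> nat \<Rightarrow> real \<Rightarrow> real" where
  "gen_harm n j a = (\<Sum>k<n. 1 / (real k + a) ^ j)"

text \<open>Complete exponential Bell polynomial Y_r(x_1,...,x_r); arguments indexed from 1.
  The sum ranges over tuples (k_1,...,k_r) of naturals with k_1 + 2 k_2 + ... + r k_r = r,
  represented as extensional functions on {1..r} (each k_j is automatically at most r).\<close>
definition bell_Y :: "nat \<Rightarrow> (nat \<Rightarrow> real) \<Rightarrow> real" where
  "bell_Y r x = (\<Sum>k \<in> {k \<in> PiE {1..r} (\<lambda>_. {..r}). (\<Sum>j=1..r. j * k j) = r}.
      fact r / (\<Prod>j=1..r. fact (k j)) * (\<Prod>j=1..r. (x j / fact j) ^ (k j)))"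

end

theory Submission
  imports Defs "HOL-Computational_Algebra.Formal_Power_Series"
begin

unbundle no vec_syntax
notation fps_nth (infixl "$" 75)

definition agree :: "nat \<Rightarrow> real fps \<Rightarrow> real fps \<Rightarrow> bool" where
  "agree N f g \<longleftrightarrow> (\<forall>s<N. f $ s = g $ s)"

lemma agree_mult:
  assumes "agree N f f'" "agree N g g'" shows "agree N (f*g) (f'*g')"
  unfolding agree_def fps_mult_nth
proof (intro allI impI sum.cong refl)
  fix s i assume "s < N" "i \<in> {0..s}"
  then show "f $ i * g $ (s - i) = f' $ i * g' $ (s - i)"
    using assms unfolding agree_def by auto
qed

lemma agree_refl: "agree N f f" by (simp add: agree_def)

lemma agree_prod:
  "finite A \<Longrightarrow> (\<And>j. j\<in>A \<Longrightarrow> agree N (f j) (g j)) \<Longrightarrow> agree N (\<Prod>j\<in>A. f j) (\<Prod>j\<in>A. g j)"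
  by (induction A rule: finite_induct) (auto intro!: agree_mult simp: agree_refl)

lemma fps_const_prod': "fps_const (\<Prod>j\<in>A. f j) = (\<Prod>j\<in>A. fps_const (f j) :: real fps)"
  by (induction A rule: infinite_finite_induct) (auto simp: fps_const_mult[symmetric])

definition cE :: "(nat \<Rightarrow> real) \<Rightarrow> nat \<Rightarrow> real" where "cE y j = y j / fact j"

definition E :: "(nat \<Rightarrow> real) \<Rightarrow> nat \<Rightarrow> real fps" where
  "E y j = Abs_fps (\<lambda>s. if j dvd s then cE y j ^ (s div j) / fact (s div j) else 0)"

definition PT :: "(nat \<Rightarrow> real) \<Rightarrow> nat \<Rightarrow> nat \<Rightarrow> real fps" where
  "PT y j N = (\<Sum>i\<le>N. fps_const (cE y j ^ i / fact i) * fps_X ^ (j*i))"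

definition G :: "(nat \<Rightarrow> real) \<Rightarrow> nat \<Rightarrow> real fps" where
  "G y m = (\<Prod>j\<in>{1..m}. E y j)"

lemma E_PT_agree:
  assumes "j \<ge> 1" shows "agree (Suc N) (E y j) (PT y j N)"
  unfolding agree_def
proof (intro allI impI)
  fix s assume s: "s < Suc N"
  have eq: "(s = j*i) \<longleftrightarrow> (j dvd s \<and> i = s div j)" for i
    using assms by auto
  have "PT y j N $ s = (\<Sum>i\<le>N. (if j dvd s \<and> i = s div j then cE y j ^ i / fact i else 0))"
    unfolding PT_def fps_sum_nth fps_mult_left_const_nth fps_X_power_nth
    by (intro sum.cong refl) (auto simp: eq)
  also have "\<dots> = (if j dvd s then cE y j ^ (s div j) / fact (s div j) else 0)"
  proof (cases "j dvd s")
    case True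
    have "s div j \<le> N" using s assms by (meson div_le_dividend le_trans less_Suc_eq_le)
    then show ?thesis using True by (simp add: sum.delta')
  qed simp
  finally show "E y j $ s = PT y j N $ s" by (simp add: E_def)
qed

lemma PT_prod_nth:
  "(\<Prod>j\<in>{1..m}. PT y j N) $ s =
     (\<Sum>k\<in>{k\<in>PiE {1..m} (\<lambda>_. {..N}). (\<Sum>j=1..m. j * k j) = s}.
        \<Prod>j\<in>{1..m}. cE y j ^ k j / fact (k j))"
proof -
  have "(\<Prod>j\<in>{1..m}. PT y j N) = (\<Sum>k\<in>PiE {1..m} (\<lambda>_. {..N}).
          \<Prod>j\<in>{1..m}. fps_const (cE y j ^ k j / fact (k j)) * fps_X ^ (j * k j))"
    unfolding PT_def by (rule prod_sum_PiE) auto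
  also have "\<dots> = (\<Sum>k\<in>PiE {1..m} (\<lambda>_. {..N}).
          fps_const (\<Prod>j\<in>{1..m}. cE y j ^ k j / fact (k j)) * fps_X ^ (\<Sum>j=1..m. j * k j))"
    by (intro sum.cong refl) (simp only: prod.distrib fps_const_prod' power_sum)
  finally have eq: "(\<Prod>j\<in>{1..m}. PT y j N) = (\<Sum>k\<in>PiE {1..m} (\<lambda>_. {..N}).
          fps_const (\<Prod>j\<in>{1..m}. cE y j ^ k j / fact (k j)) * fps_X ^ (\<Sum>j=1..m. j * k j))" .
  have "(\<Prod>j\<in>{1..m}. PT y j N) $ s = (\<Sum>k\<in>PiE {1..m} (\<lambda>_. {..N}).
          (if (\<Sum>j=1..m. j * k j) = s then (\<Prod>j\<in>{1..m}. cE y j ^ k j / fact (k j)) else 0))"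
    unfolding eq fps_sum_nth fps_mult_left_const_nth fps_X_power_nth by (intro sum.cong refl) auto
  also have "\<dots> = (\<Sum>k\<in>{k\<in>PiE {1..m} (\<lambda>_. {..N}). (\<Sum>j=1..m. j * k j) = s}.
        \<Prod>j\<in>{1..m}. cE y j ^ k j / fact (k j))"
    by (rule sum.inter_filter[symmetric]) (simp add: finite_PiE)
  finally show ?thesis .
qed

lemma G_nth:
  assumes "s \<le> N"
  shows "G y m $ s = (\<Sum>k\<in>{k\<in>PiE {1..m} (\<lambda>_. {..N}). (\<Sum>j=1..m. j * k j) = s}.
        \<Prod>j\<in>{1..m}. cE y j ^ k j / fact (k j))"
proof -
  have "agree (Suc N) (G y m) (\<Prod>j\<in>{1..m}. PT y j N)"
    unfolding G_def by (intro agree_prod E_PT_agree) auto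
  then have "G y m $ s = (\<Prod>j\<in>{1..m}. PT y j N) $ s" using assms by (auto simp: agree_def)
  then show ?thesis unfolding PT_prod_nth .
qed

lemma bell_G: "bell_Y r y = fact r * G y r $ r"
  unfolding bell_Y_def G_nth[OF order.refl] sum_distrib_left
  by (intro sum.cong refl) (simp add: cE_def prod.distrib prod_dividef power_divide)

lemma E_agree_1:
  assumes "s < j" shows "agree (Suc s) (E y j) 1"
  unfolding agree_def
proof (intro allI impI)
  fix t assume "t < Suc s"
  then have "t < j" using assms by simp
  then have "j dvd t \<longleftrightarrow> t = 0" using dvd_imp_le by fastforce
  then show "E y j $ t = 1 $ t" by (auto simp: E_def)
qed

lemma G_nth_stable:
  assumes "s \<le> m" shows "G y m $ s = G y s $ s"
proof -
  have "{1..m} = {1..s} \<union> {s<..m}" using assms by auto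
  then have eq: "G y m = G y s * (\<Prod>j\<in>{s<..m}. E y j)"
    unfolding G_def by (simp add: prod.union_disjoint ivl_disj_int)
  have ag0: "agree (Suc s) (\<Prod>j\<in>{s<..m}. E y j) (\<Prod>j\<in>{s<..m}. (1::real fps))"
    by (intro agree_prod E_agree_1) auto
  have ag: "agree (Suc s) (G y s * (\<Prod>j\<in>{s<..m}. E y j)) (G y s * 1)"
    using agree_mult[OF agree_refl ag0] by simp
  show ?thesis using ag[unfolded agree_def, rule_format, of s] unfolding eq by simp
qed

lemma E_deriv:
  assumes "j \<ge> 1"
  shows "fps_deriv (E y j) = fps_const (y j / fact (j-1)) * (fps_X ^ (j-1) * E y j)"
proof (rule fps_ext)
  fix s
  obtain j' where j: "j = Suc j'" using assms by (cases j) auto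
  show "fps_deriv (E y j) $ s = (fps_const (y j / fact (j-1)) * (fps_X ^ (j-1) * E y j)) $ s"
  proof (cases "j dvd Suc s")
    case True
    then obtain q where q: "Suc s = j * q" by blast
    then obtain q' where q': "q = Suc q'" by (cases q) auto
    have s1: "\<not> s < j'" using q q' j by auto
    have s2: "s - j' = j * q'" using q q' j by simp
    have Ejq: "E y j $ (j*q) = cE y j ^ q / fact q"
      using assms by (simp add: E_def)
    have "fps_deriv (E y j) $ s = of_nat (Suc s) * (cE y j ^ q / fact q)"
      unfolding fps_deriv_nth using Ejq q by (simp del: of_nat_Suc)
    also have "\<dots> = y j / fact j' * (cE y j ^ q' / fact q')"
    proof -
      have sq: "of_nat (Suc s) = (of_nat j * of_nat q :: real)" using q by (metis of_nat_mult)
      show ?thesis unfolding sq q' j cE_def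
        by (simp add: field_simps fact_Suc power_Suc del: of_nat_Suc)
    qed
    also have "\<dots> = (fps_const (y j / fact (j-1)) * (fps_X ^ (j-1) * E y j)) $ s"
    proof -
      have Ejq': "E y j $ (j*q') = cE y j ^ q' / fact q'"
        using assms by (simp add: E_def)
      have jj: "j - 1 = j'" using j by simp
      show ?thesis using s1 s2 Ejq' unfolding fps_mult_left_const_nth fps_X_power_mult_nth jj
        by simp
    qed
    finally show ?thesis .
  next
    case False
    have "fps_deriv (E y j) $ s = 0" using False by (simp add: E_def)
    moreover have "(fps_X ^ (j-1) * E y j) $ s = 0"
    proof (cases "s < j'")
      case False
      have "Suc s = (s - j') + j" using False j by simp
      then have "\<not> j dvd (s - j')" using \<open>\<not> j dvd Suc s\<close> by (metis dvd_add_triv_right_iff)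
      then show ?thesis using False j by (simp add: fps_X_power_mult_nth E_def)
    qed (simp add: fps_X_power_mult_nth j)
    ultimately show ?thesis by simp
  qed
qed

lemma ring_aux: fixes c X E G D :: "'a::comm_ring"
  shows "c*(X*E)*G + E*(D*G) = (c*X + D)*(E*G)" by (simp add: algebra_simps)

definition D :: "(nat \<Rightarrow> real) \<Rightarrow> nat \<Rightarrow> real fps" where
  "D y m = (\<Sum>j\<in>{1..m}. fps_const (y j / fact (j-1)) * fps_X ^ (j-1))"

lemma G_deriv: "fps_deriv (G y m) = D y m * G y m"
proof (induction m)
  case 0 show ?case by (simp add: G_def D_def)
next
  case (Suc m)
  have G: "G y (Suc m) = E y (Suc m) * G y m" by (simp add: G_def prod.nat_ivl_Suc')
  have Dd: "D y (Suc m) = fps_const (y (Suc m) / fact m) * fps_X ^ m + D y m"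
    by (simp add: D_def sum.nat_ivl_Suc')
  have "fps_deriv (G y (Suc m)) = fps_const (y (Suc m) / fact m) * (fps_X ^ m * E y (Suc m)) * G y m
          + E y (Suc m) * (D y m * G y m)"
    unfolding G fps_deriv_mult Suc using E_deriv[of "Suc m" y] by simp
  also have "\<dots> = (fps_const (y (Suc m) / fact m) * fps_X ^ m + D y m) * (E y (Suc m) * G y m)"
    by (rule ring_aux[of "fps_const (y (Suc m) / fact m)" "fps_X ^ m" "E y (Suc m)" "G y m" "D y m"])
  finally show ?case unfolding G Dd .
qed

lemma D_nth: "D y m $ t = (if t < m then y (Suc t) / fact t else 0)"
proof -
  have "D y m $ t = (\<Sum>j\<in>{1..m}. (if j = Suc t then y j / fact (j-1) else 0))"
    unfolding D_def fps_sum_nth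
  proof (intro sum.cong refl)
    fix j assume "j \<in> {1..m}"
    then show "(fps_const (y j / fact (j - 1)) * fps_X ^ (j - 1)) $ t =
               (if j = Suc t then y j / fact (j - 1) else 0)"
      by (cases j) auto
  qed
  also have "\<dots> = (if Suc t \<in> {1..m} then y (Suc t) / fact (Suc t - 1) else 0)"
    by (rule sum.delta) simp
  also have "\<dots> = (if t < m then y (Suc t) / fact t else 0)"
    by simp
  finally show ?thesis .
qed

lemma bell_rec:
  "bell_Y (Suc r) y = (\<Sum>i\<le>r. of_nat (r choose i) * y (Suc i) * bell_Y (r - i) y)"
proof -
  have Gn: "G y (Suc r) $ u = bell_Y u y / fact u" if "u \<le> Suc r" for u
  proof -
    have "G y (Suc r) $ u = G y u $ u" by (rule G_nth_stable[OF that])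
    also have "\<dots> = bell_Y u y / fact u" by (simp add: bell_G[of u y])
    finally show ?thesis .
  qed
  have "fps_deriv (G y (Suc r)) $ r = (D y (Suc r) * G y (Suc r)) $ r" by (simp add: G_deriv)
  hence "of_nat (Suc r) * G y (Suc r) $ Suc r =
           (\<Sum>i=0..r. D y (Suc r) $ i * G y (Suc r) $ (r - i))"
    by (simp add: fps_mult_nth)
  also have "\<dots> = (\<Sum>i\<le>r. y (Suc i) / fact i * (bell_Y (r-i) y / fact (r-i)))"
    by (intro sum.cong) (auto simp: D_nth Gn)
  finally have *: "of_nat (Suc r) * (bell_Y (Suc r) y / fact (Suc r)) =
       (\<Sum>i\<le>r. y (Suc i) / fact i * (bell_Y (r-i) y / fact (r-i)))"
    by (simp add: Gn)
  have f: "(fact (Suc r)::real) = of_nat (Suc r) * fact r" by (rule fact_Suc)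
  have fn: "(fact r :: real) \<noteq> 0" "(of_nat (Suc r) :: real) \<noteq> 0" by simp_all
  have "fact r * (of_nat (Suc r) * (bell_Y (Suc r) y / fact (Suc r))) =
        (fact r * of_nat (Suc r)) * (bell_Y (Suc r) y / fact (Suc r))"
    by (simp only: mult.assoc)
  also have "fact r * of_nat (Suc r) = (fact (Suc r)::real)" unfolding f by (rule mult.commute)
  also have "fact (Suc r) * (bell_Y (Suc r) y / fact (Suc r)) = bell_Y (Suc r) y"
    by (rule times_divide_eq_right[THEN trans]) (rule nonzero_mult_div_cancel_left, simp)
  finally have "bell_Y (Suc r) y = fact r * (of_nat (Suc r) * (bell_Y (Suc r) y / fact (Suc r)))"
    by simp
  also note *
  also have "fact r * (\<Sum>i\<le>r. y (Suc i) / fact i * (bell_Y (r-i) y / fact (r-i))) =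
      (\<Sum>i\<le>r. of_nat (r choose i) * y (Suc i) * bell_Y (r - i) y)"
    unfolding sum_distrib_left by (intro sum.cong refl) (simp add: binomial_fact field_simps)
  finally show ?thesis .
qed


definition yv :: "nat \<Rightarrow> real \<Rightarrow> nat \<Rightarrow> real" where
  "yv n a = (\<lambda>j. (-1) ^ j * fact (j - 1) * gen_harm n j a)"

definition tm :: "real \<Rightarrow> nat \<Rightarrow> nat \<Rightarrow> real \<Rightarrow> real" where
  "tm x r n a = - (1 / real n) * (pochhammer x n / pochhammer a n) *
              bell_Y r (\<lambda>j. (-1) ^ j * fact (j - 1) * gen_harm n j a)"

lemma tm_yv: "tm x r n a = - (1 / real n) * (pochhammer x n / pochhammer a n) * bell_Y r (yv n a)"
  by (simp add: tm_def yv_def)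

lemma bell_0: "bell_Y 0 y = 1" unfolding bell_Y_def by simp

lemma bell_1: "bell_Y (Suc 0) y = y 1"
  using bell_rec[of 0 y] by (simp add: bell_0)

lemma tm_rec: "tm x (Suc r) n a = (\<Sum>i\<le>r. of_nat (r choose i) * yv n a (Suc i) * tm x (r - i) n a)"
  unfolding tm_yv bell_rec sum_distrib_left by (intro sum.cong refl) (simp add: algebra_simps)

lemma pascal_sum:
  fixes u v :: "nat \<Rightarrow> real"
  shows "(\<Sum>i\<le>k. of_nat (k choose i) * (u (Suc i) * v (k-i) + u i * v (Suc (k-i)))) =
         (\<Sum>i\<le>Suc k. of_nat (Suc k choose i) * u i * v (Suc k - i))"
proof -
  have A: "(\<Sum>i\<le>k. of_nat (k choose i) * u i * v (Suc (k-i))) =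
           u 0 * v (Suc k) + (\<Sum>i\<le>k. of_nat (k choose Suc i) * u (Suc i) * v (k - i))"
  proof -
    have "(\<Sum>i\<le>k. of_nat (k choose i) * u i * v (Suc (k-i))) =
          (\<Sum>i\<le>Suc k. of_nat (k choose i) * u i * v (Suc k - i))"
      by (simp add: Suc_diff_le)
    also have "\<dots> = u 0 * v (Suc k) + (\<Sum>i\<le>k. of_nat (k choose Suc i) * u (Suc i) * v (Suc k - Suc i))"
      by (subst sum.atMost_Suc_shift) simp
    finally show ?thesis by simp
  qed
  have "(\<Sum>i\<le>Suc k. of_nat (Suc k choose i) * u i * v (Suc k - i)) =
        u 0 * v (Suc k) + (\<Sum>i\<le>k. of_nat (Suc k choose Suc i) * u (Suc i) * v (k - i))"
    by (subst sum.atMost_Suc_shift) simp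
  also have "\<dots> = u 0 * v (Suc k) + (\<Sum>i\<le>k. of_nat (k choose i) * u (Suc i) * v (k - i))
                  + (\<Sum>i\<le>k. of_nat (k choose Suc i) * u (Suc i) * v (k - i))"
    by (simp add: sum.distrib algebra_simps)
  also have "\<dots> = (\<Sum>i\<le>k. of_nat (k choose i) * u (Suc i) * v (k - i)) +
                  (\<Sum>i\<le>k. of_nat (k choose i) * u i * v (Suc (k-i)))"
    using A by simp
  also have "\<dots> = (\<Sum>i\<le>k. of_nat (k choose i) * (u (Suc i) * v (k-i) + u i * v (Suc (k-i))))"
    by (simp add: sum.distrib algebra_simps)
  finally show ?thesis ..
qed

lemma aux_pow:
  fixes t :: real assumes "t > 0"
  shows "(0 * t ^ j - 1 * (of_nat j * ((0 + 1) * t ^ (j - Suc 0)))) / (t ^ j * t ^ j) = - real j * (1 / t ^ Suc j)"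
proof (cases j)
  case (Suc j')
  have "t ^ j' > 0" using assms by simp
  then show ?thesis using Suc assms by (simp add: field_simps power_Suc)
qed simp

lemma gen_harm_deriv:
  assumes "a > 0"
  shows "((\<lambda>a. gen_harm n j a) has_field_derivative (- real j * gen_harm n (Suc j) a)) (at a)"
proof -
  have d: "((\<lambda>a. 1 / (real k + a) ^ j) has_field_derivative (- real j * (1 / (real k + a) ^ Suc j))) (at a)"
    for k
  proof -
    have pos: "real k + a > 0" using assms by simp
    have p: "((\<lambda>a. (real k + a) ^ j) has_field_derivative of_nat j * ((0 + 1) * (real k + a) ^ (j - Suc 0))) (at a)"
      by (intro DERIV_power DERIV_add DERIV_const DERIV_ident)
    have "((\<lambda>a. 1 / (real k + a) ^ j) has_field_derivative
       (0 * (real k + a) ^ j - 1 * (of_nat j * ((0 + 1) * (real k + a) ^ (j - Suc 0)))) / ((real k + a) ^ j * (real k + a) ^ j)) (at a)"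
      by (intro DERIV_divide DERIV_const p) (use pos in simp)
    also have "(0 * (real k + a) ^ j - 1 * (of_nat j * ((0 + 1) * (real k + a) ^ (j - Suc 0)))) / ((real k + a) ^ j * (real k + a) ^ j)
        = - real j * (1 / (real k + a) ^ Suc j)"
      using aux_pow[OF pos] .
    finally show ?thesis .
  qed
  show ?thesis unfolding gen_harm_def sum_distrib_left
    by (intro DERIV_sum d)
qed

lemma yv_deriv:
  assumes "a > 0" "j \<ge> 1"
  shows "((\<lambda>a. yv n a j) has_field_derivative yv n a (Suc j)) (at a)"
proof -
  have "((\<lambda>a. yv n a j) has_field_derivative ((-1) ^ j * fact (j - 1)) * (- real j * gen_harm n (Suc j) a)) (at a)"
    unfolding yv_def by (intro DERIV_cmult gen_harm_deriv assms)
  also have "((-1) ^ j * fact (j - 1)) * (- real j * gen_harm n (Suc j) a) = yv n a (Suc j)"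
  proof -
    obtain j' where j: "j = Suc j'" using assms by (cases j) auto
    show ?thesis unfolding yv_def j by (simp add: algebra_simps)
  qed
  finally show ?thesis .
qed

lemma poch_pos: "a > 0 \<Longrightarrow> pochhammer a n > (0::real)"
  by (simp add: pochhammer_prod prod_pos)

lemma poch_deriv:
  assumes "a > 0"
  shows "((\<lambda>a. pochhammer a n) has_field_derivative pochhammer a n * gen_harm n 1 a) (at a)"
proof -
  have "((\<lambda>u. \<Prod>i\<in>{0..<n}. u + of_nat i) has_field_derivative
          (\<Prod>i\<in>{0..<n}. a + of_nat i) * (\<Sum>i\<in>{0..<n}. 1 / (a + of_nat i))) (at a)"
    using assms by (intro has_field_derivative_prod'[of "{0..<n}" "\<lambda>i u. u + of_nat i" a "\<lambda>i. 1", simplified])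
       (auto intro!: derivative_eq_intros)
  then show ?thesis
    by (simp add: pochhammer_prod gen_harm_def atLeast0LessThan add.commute)
qed

lemma pref_deriv:
  assumes "a > 0"
  shows "((\<lambda>a. C / pochhammer a n) has_field_derivative (C / pochhammer a n) * yv n a 1) (at a)"
proof -
  have p: "pochhammer a n \<noteq> 0" using poch_pos[OF assms, of n] by simp
  have "((\<lambda>a. C / pochhammer a n) has_field_derivative
          (0 * pochhammer a n - C * (pochhammer a n * gen_harm n 1 a)) / (pochhammer a n * pochhammer a n)) (at a)"
    by (intro DERIV_divide DERIV_const poch_deriv assms p)
  also have "(0 * pochhammer a n - C * (pochhammer a n * gen_harm n 1 a)) / (pochhammer a n * pochhammer a n)
      = (C / pochhammer a n) * yv n a 1"
    using p by (simp add: yv_def field_simps)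
  finally show ?thesis .
qed

lemma tm_deriv:
  assumes "a > 0"
  shows "((\<lambda>a. tm x r n a) has_field_derivative tm x (Suc r) n a) (at a)"
  using assms
proof (induction r arbitrary: a rule: less_induct)
  case (less r)
  show ?case
  proof (cases r)
    case 0
    have eq: "(\<lambda>a. tm x 0 n a) = (\<lambda>a. (- (1 / real n) * pochhammer x n) / pochhammer a n)"
      by (simp add: tm_yv bell_0)
    have "((\<lambda>a. tm x 0 n a) has_field_derivative
            (- (1 / real n) * pochhammer x n) / pochhammer a n * yv n a 1) (at a)"
      unfolding eq by (rule pref_deriv[OF less.prems])
    also have "(- (1 / real n) * pochhammer x n) / pochhammer a n * yv n a 1 = tm x (Suc 0) n a"
      by (simp add: tm_yv bell_1)
    finally show ?thesis using 0 by simp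
  next
    case (Suc k)
    have eq: "(\<lambda>a. tm x r n a) = (\<lambda>a. \<Sum>i\<le>k. of_nat (k choose i) * yv n a (Suc i) * tm x (k - i) n a)"
      unfolding Suc by (simp add: tm_rec)
    have "((\<lambda>a. \<Sum>i\<le>k. of_nat (k choose i) * yv n a (Suc i) * tm x (k - i) n a) has_field_derivative
          (\<Sum>i\<le>k. of_nat (k choose i) * (yv n a (Suc (Suc i)) * tm x (k - i) n a +
                     yv n a (Suc i) * tm x (Suc (k - i)) n a))) (at a)"
    proof (intro DERIV_sum)
      fix i assume "i \<in> {..k}"
      have ih: "((\<lambda>a. tm x (k - i) n a) has_field_derivative tm x (Suc (k - i)) n a) (at a)"
        using less.IH[of "k - i" a] less.prems Suc by simp
      have yd: "((\<lambda>a. yv n a (Suc i)) has_field_derivative yv n a (Suc (Suc i))) (at a)"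
        by (rule yv_deriv[OF less.prems]) simp
      have "((\<lambda>a. of_nat (k choose i) * (yv n a (Suc i) * tm x (k - i) n a)) has_field_derivative
              of_nat (k choose i) * (yv n a (Suc (Suc i)) * tm x (k - i) n a +
                     yv n a (Suc i) * tm x (Suc (k - i)) n a)) (at a)"
        by (intro DERIV_cmult DERIV_mult[OF yd ih, THEN DERIV_cong]) simp
      then show "((\<lambda>a. of_nat (k choose i) * yv n a (Suc i) * tm x (k - i) n a) has_field_derivative
              of_nat (k choose i) * (yv n a (Suc (Suc i)) * tm x (k - i) n a +
                     yv n a (Suc i) * tm x (Suc (k - i)) n a)) (at a)"
        by (simp add: mult.assoc)
    qed
    also have "(\<Sum>i\<le>k. of_nat (k choose i) * (yv n a (Suc (Suc i)) * tm x (k - i) n a +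
                     yv n a (Suc i) * tm x (Suc (k - i)) n a)) =
               (\<Sum>i\<le>Suc k. of_nat (Suc k choose i) * yv n a (Suc i) * tm x (Suc k - i) n a)"
      using pascal_sum[of k "\<lambda>i. yv n a (Suc i)" "\<lambda>j. tm x j n a"] by simp
    also have "\<dots> = tm x (Suc r) n a" unfolding Suc by (rule tm_rec[symmetric])
    finally show ?thesis unfolding eq .
  qed
qed


lemma poch_nonneg: "a \<ge> 0 \<Longrightarrow> pochhammer a n \<ge> (0::real)"
  by (simp add: pochhammer_prod prod_nonneg)

lemma poch_mono: "0 < c \<Longrightarrow> c \<le> a \<Longrightarrow> pochhammer c n \<le> pochhammer (a::real) n"
  unfolding pochhammer_prod by (intro prod_mono) auto

lemma factor_le:
  fixes t \<delta> :: real assumes t: "t > 0" and d: "\<delta> > 0"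
  shows "1 - \<delta> / t \<le> (t / (t + 1)) powr \<delta>"
proof -
  have l1: "ln (1 + 1/t) \<le> 1/t" by (rule ln_add_one_self_le_self) (use t in simp)
  have "t/(t+1) = inverse (1 + 1/t)" using t by (simp add: field_simps)
  then have l2: "ln (t/(t+1)) = - ln (1 + 1/t)" by (simp add: ln_inverse)
  have "\<delta> * ln (1 + 1/t) \<le> \<delta> * (1/t)" using l1 d by (intro mult_left_mono) auto
  then have l3: "- \<delta> / t \<le> \<delta> * ln (t / (t+1))" using l2 by simp
  have "1 - \<delta>/t \<le> exp (- \<delta> / t)" using exp_ge_add_one_self[of "-\<delta>/t"] by simp
  also have "\<dots> \<le> exp (\<delta> * ln (t/(t+1)))" using l3 by simp
  also have "\<dots> = (t/(t+1)) powr \<delta>" using t by (simp add: powr_def)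
  finally show ?thesis .
qed

lemma poch_ratio_le:
  fixes b \<delta> :: real assumes b: "b > 0" and d: "\<delta> > 0" and bd: "b - \<delta> \<ge> 0"
  shows "pochhammer (b - \<delta>) m / pochhammer b m \<le> (b / (b + m)) powr \<delta>"
proof (induction m)
  case 0 then show ?case using b by simp
next
  case (Suc m)
  have pb: "pochhammer b m > 0" using b by (rule poch_pos)
  have nn: "pochhammer (b - \<delta>) m \<ge> 0" using bd by (rule poch_nonneg)
  have t: "b + m > 0" using b by simp
  have f0: "0 \<le> 1 - \<delta> / (b + m)" using t bd by (simp add: field_simps)
  have "pochhammer (b - \<delta>) (Suc m) / pochhammer b (Suc m) =
        (pochhammer (b - \<delta>) m / pochhammer b m) * (1 - \<delta> / (b + m))"
    using pb t by (simp add: pochhammer_rec' field_simps)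
  also have "\<dots> \<le> (b/(b+m)) powr \<delta> * ((b+m)/((b+m)+1)) powr \<delta>"
    by (intro mult_mono Suc.IH factor_le t d f0) simp
  also have "\<dots> = (b/(b + Suc m)) powr \<delta>"
  proof -
    have g: "v/u * (u/w) = v/w" if "u \<noteq> 0" for u v w :: real using that by (simp add: field_simps)
    have "(b/(b+m)) * ((b+m)/((b+m)+1)) = b/((b+m)+1)" using t g[of "b+m" b "(b+m)+1"] by simp
    then have "(b/(b+m)) * ((b+m)/((b+m)+1)) = b/(b + Suc m)" by (simp add: add_ac)
    then show ?thesis by (simp add: powr_mult[symmetric])
  qed
  finally show ?case .
qed

lemma poch_ratio_bound:
  fixes x c :: real assumes c: "c > 0" and xc: "x < c"
  shows "\<exists>A K. \<forall>n\<ge>K. \<bar>pochhammer x n\<bar> / pochhammer c n \<le> A * (c + n) powr (x - c)"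
proof -
  define K where "K = nat \<lceil>\<bar>x\<bar>\<rceil>"
  have xK: "x + K \<ge> 0" unfolding K_def by linarith
  define \<delta> where "\<delta> = c - x"
  have d: "\<delta> > 0" using xc by (simp add: \<delta>_def)
  define A where "A = \<bar>pochhammer x K\<bar> / pochhammer c K * (c + K) powr \<delta>"
  have cK: "c + K > 0" using c by simp
  have "\<forall>n\<ge>K. \<bar>pochhammer x n\<bar> / pochhammer c n \<le> A * (c + n) powr (x - c)"
  proof (intro allI impI)
    fix n assume n: "K \<le> n"
    have px: "pochhammer x n = pochhammer x K * pochhammer (x + K) (n - K)"
      by (rule pochhammer_product[OF n])
    have pc: "pochhammer c n = pochhammer c K * pochhammer (c + K) (n - K)"
      by (rule pochhammer_product[OF n])
    have eq: "x + K = (c + K) - \<delta>" by (simp add: \<delta>_def)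
    have cn: "(c + K) + real (n - K) = c + n" using n by (simp add: of_nat_diff)
    have r: "pochhammer (x + K) (n - K) / pochhammer (c + K) (n - K) \<le> ((c+K)/(c + n)) powr \<delta>"
    proof -
      have "pochhammer ((c+K) - \<delta>) (n-K) / pochhammer (c+K) (n-K) \<le> ((c+K)/((c+K) + real (n-K))) powr \<delta>"
        by (rule poch_ratio_le[OF cK d]) (use xK eq in simp)
      then show ?thesis by (simp only: eq[symmetric] cn)
    qed
    have pK: "pochhammer c K > 0" using c by (rule poch_pos)
    have pK2: "pochhammer (c + K) (n - K) > 0" using cK by (rule poch_pos)
    have nn: "pochhammer (x + K) (n - K) \<ge> 0" using xK by (rule poch_nonneg)
    have "\<bar>pochhammer x n\<bar> / pochhammer c n =
          \<bar>pochhammer x K\<bar> / pochhammer c K * (pochhammer (x + K) (n - K) / pochhammer (c + K) (n - K))"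
      unfolding px pc using nn by (simp add: abs_mult)
    also have "\<dots> \<le> \<bar>pochhammer x K\<bar> / pochhammer c K * ((c+K)/(c + n)) powr \<delta>"
      by (intro mult_left_mono r) (use pK in simp)
    also have "\<dots> = A * (c + n) powr (x - c)"
    proof -
      have xc': "x - c = - \<delta>" by (simp add: \<delta>_def)
      show ?thesis unfolding xc' powr_minus powr_divide A_def by (simp add: divide_inverse mult.assoc)
    qed
    finally show "\<bar>pochhammer x n\<bar> / pochhammer c n \<le> A * (c + n) powr (x - c)" .
  qed
  then show ?thesis by blast
qed

lemma recip_le_ln: fixes t :: real assumes t: "t > 0" shows "1/(t+1) \<le> ln ((t+1)/t)"
proof -
  have "ln (t/(t+1)) \<le> t/(t+1) - 1" by (rule ln_le_minus_one) (use t in simp)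
  moreover have "ln ((t+1)/t) = - ln (t/(t+1))" using t by (simp add: ln_div)
  moreover have "t/(t+1) - 1 = - 1/(t+1)" using t by (simp add: field_simps)
  ultimately show ?thesis by simp
qed

lemma harm_bound:
  assumes c: "c > 0" shows "gen_harm (Suc n) 1 c \<le> 1/c + ln ((c + n)/c)"
proof (induction n)
  case 0 then show ?case by (simp add: gen_harm_def)
next
  case (Suc n)
  have t: "c + n > 0" using c by simp
  have "gen_harm (Suc (Suc n)) 1 c = gen_harm (Suc n) 1 c + 1/((c + n) + 1)"
    by (simp add: gen_harm_def add_ac)
  also have "\<dots> \<le> 1/c + (ln ((c + n)/c) + ln (((c + n) + 1)/(c + n)))"
    using Suc.IH recip_le_ln[OF t] by linarith
  also have "ln ((c + n)/c) + ln (((c + n) + 1)/(c + n)) = ln ((c + Suc n)/c)"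
    using t c by (simp add: ln_div add_ac)
  finally show ?case by simp
qed

lemma ln_le_powr: fixes y \<eta> :: real assumes y: "y > 0" and e: "\<eta> > 0"
  shows "ln y \<le> y powr \<eta> / \<eta>"
proof -
  have "ln (y powr \<eta>) \<le> y powr \<eta> - 1" by (rule ln_le_minus_one) (use y in simp)
  then have "\<eta> * ln y \<le> y powr \<eta>" by simp
  then show ?thesis using e by (simp add: field_simps)
qed


lemma bell_abs_bound:
  assumes M: "M \<ge> 1" and yb: "\<And>j. j \<in> {1..r} \<Longrightarrow> \<bar>y j\<bar> \<le> M * \<beta> j"
    and b0: "\<And>j. \<beta> j \<ge> 0"
  shows "\<bar>bell_Y r y\<bar> \<le> M ^ r * bell_Y r \<beta>"
proof -
  let ?K = "{k \<in> PiE {1..r} (\<lambda>_. {..r}). (\<Sum>j=1..r. j * k j) = r}"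
  let ?c = "\<lambda>k. fact r / (\<Prod>j=1..r. fact (k j)) :: real"
  have "\<bar>bell_Y r y\<bar> \<le> (\<Sum>k\<in>?K. \<bar>?c k * (\<Prod>j=1..r. (y j / fact j) ^ k j)\<bar>)"
    unfolding bell_Y_def by (rule sum_abs)
  also have "\<dots> \<le> (\<Sum>k\<in>?K. M ^ r * (?c k * (\<Prod>j=1..r. (\<beta> j / fact j) ^ k j)))"
  proof (rule sum_mono)
    fix k assume k: "k \<in> ?K"
    have sk: "(\<Sum>j=1..r. k j) \<le> r"
    proof -
      have "(\<Sum>j=1..r. k j) \<le> (\<Sum>j=1..r. j * k j)" by (intro sum_mono) auto
      then show ?thesis using k by simp
    qed
    have c0: "?c k \<ge> 0" by (intro divide_nonneg_nonneg prod_nonneg) auto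
    have "\<bar>\<Prod>j=1..r. (y j / fact j) ^ k j\<bar> = (\<Prod>j=1..r. (\<bar>y j\<bar> / fact j) ^ k j)"
      by (simp add: abs_prod power_abs)
    also have "\<dots> \<le> (\<Prod>j=1..r. (M * (\<beta> j / fact j)) ^ k j)"
    proof (intro prod_mono conjI)
      fix j assume j: "j \<in> {1..r}"
      show "0 \<le> (\<bar>y j\<bar> / fact j) ^ k j" by simp
      have "\<bar>y j\<bar> / fact j \<le> M * \<beta> j / fact j" using yb[OF j] by (intro divide_right_mono) auto
      then show "(\<bar>y j\<bar> / fact j) ^ k j \<le> (M * (\<beta> j / fact j)) ^ k j"
        by (intro power_mono) auto
    qed
    also have "\<dots> = (\<Prod>j=1..r. M ^ k j * (\<beta> j / fact j) ^ k j)"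
      by (rule prod.cong[OF refl]) (rule power_mult_distrib)
    also have "\<dots> = M ^ (\<Sum>j=1..r. k j) * (\<Prod>j=1..r. (\<beta> j / fact j) ^ k j)"
      by (simp only: prod.distrib power_sum)
    also have "\<dots> \<le> M ^ r * (\<Prod>j=1..r. (\<beta> j / fact j) ^ k j)"
      by (intro mult_right_mono power_increasing sk M prod_nonneg) (simp add: b0)
    finally have *: "\<bar>\<Prod>j=1..r. (y j / fact j) ^ k j\<bar> \<le> M ^ r * (\<Prod>j=1..r. (\<beta> j / fact j) ^ k j)" .
    have "\<bar>?c k * (\<Prod>j=1..r. (y j / fact j) ^ k j)\<bar> = ?c k * \<bar>\<Prod>j=1..r. (y j / fact j) ^ k j\<bar>"
      by (simp only: abs_mult abs_of_nonneg[OF c0])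
    also have "\<dots> \<le> ?c k * (M ^ r * (\<Prod>j=1..r. (\<beta> j / fact j) ^ k j))"
      by (intro mult_left_mono * c0)
    finally show "\<bar>?c k * (\<Prod>j=1..r. (y j / fact j) ^ k j)\<bar> \<le> M ^ r * (?c k * (\<Prod>j=1..r. (\<beta> j / fact j) ^ k j))"
      by (simp add: mult_ac)
  qed
  also have "\<dots> = M ^ r * bell_Y r \<beta>" unfolding bell_Y_def sum_distrib_left ..
  finally show ?thesis .
qed

definition \<beta>c :: "real \<Rightarrow> nat \<Rightarrow> real" where "\<beta>c c j = fact (j - 1) / c ^ (j - 1)"

lemma gen_harm_nonneg: "c > 0 \<Longrightarrow> gen_harm n j c \<ge> 0"
  unfolding gen_harm_def by (intro sum_nonneg) simp

lemma gen_harm_le: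
  assumes c: "c > 0" and ca: "c \<le> a" and j: "j \<ge> 1"
  shows "gen_harm n j a \<le> gen_harm n 1 c / c ^ (j - 1)"
  unfolding gen_harm_def sum_divide_distrib
proof (intro sum_mono)
  fix k assume "k \<in> {..<n}"
  obtain j' where jj: "j = Suc j'" using j by (cases j) auto
  have p1: "real k + c > 0" using c by simp
  have "(real k + c) * c ^ j' \<le> (real k + c) * (real k + c) ^ j'"
    by (intro mult_left_mono power_mono) (use c in auto)
  also have "\<dots> \<le> (real k + a) ^ j" unfolding jj power_Suc[symmetric] by (intro power_mono) (use c ca in auto)
  finally have le: "(real k + c) * c ^ j' \<le> (real k + a) ^ j" .
  have pos: "(real k + c) * c ^ j' > 0" using c p1 by simp
  have pa: "(real k + a) ^ j > 0" using c ca by simp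
  have "1 / (real k + a) ^ j \<le> 1 / ((real k + c) * c ^ j')"
    by (rule divide_left_mono[OF le]) (use pos pa in auto)
  then show "1 / (real k + a) ^ j \<le> 1 / (real k + c) ^ 1 / c ^ (j - 1)"
    by (simp add: jj)
qed

lemma tm_bound:
  assumes c: "c > 0" and ca: "c \<le> a"
  shows "\<bar>tm x r n a\<bar> \<le> (1 / real n) * (\<bar>pochhammer x n\<bar> / pochhammer c n) *
           ((max 1 (gen_harm n 1 c)) ^ r * bell_Y r (\<beta>c c))"
proof -
  let ?M = "max 1 (gen_harm n 1 c)"
  have pc: "pochhammer c n > 0" using c by (rule poch_pos)
  have pa: "pochhammer c n \<le> pochhammer a n" using c ca by (rule poch_mono)
  have y: "\<bar>yv n a j\<bar> \<le> ?M * \<beta>c c j" if j: "j \<in> {1..r}" for j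
  proof -
    have j1: "j \<ge> 1" using j by simp
    have a0: "a > 0" using c ca by simp
    have "\<bar>yv n a j\<bar> = fact (j - 1) * gen_harm n j a"
      using gen_harm_nonneg[OF a0, of n j] by (simp add: yv_def abs_mult)
    also have "\<dots> \<le> fact (j - 1) * (gen_harm n 1 c / c ^ (j - 1))"
      by (intro mult_left_mono gen_harm_le c ca j1) simp
    also have "\<dots> = gen_harm n 1 c * \<beta>c c j" by (simp add: \<beta>c_def)
    also have "\<dots> \<le> ?M * \<beta>c c j" by (intro mult_right_mono) (use c in \<open>auto simp: \<beta>c_def\<close>)
    finally show ?thesis .
  qed
  have b: "\<bar>bell_Y r (yv n a)\<bar> \<le> ?M ^ r * bell_Y r (\<beta>c c)"
    by (rule bell_abs_bound) (use y c in \<open>auto simp: \<beta>c_def\<close>)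
  have "\<bar>tm x r n a\<bar> = (1 / real n) * (\<bar>pochhammer x n\<bar> / pochhammer a n) * \<bar>bell_Y r (yv n a)\<bar>"
    using pc pa by (simp add: tm_yv abs_mult)
  also have "\<dots> \<le> (1 / real n) * (\<bar>pochhammer x n\<bar> / pochhammer c n) * (?M ^ r * bell_Y r (\<beta>c c))"
  proof -
    have A: "\<bar>pochhammer x n\<bar> / pochhammer a n \<le> \<bar>pochhammer x n\<bar> / pochhammer c n"
      by (rule divide_left_mono) (use pc pa in auto)
    show ?thesis by (intro mult_mono mult_left_mono A b) (use pc in auto)
  qed
  finally show ?thesis .
qed


lemma harm_max_bound:
  assumes c: "c > 0" and e: "\<eta> > 0"
  shows "max 1 (gen_harm (Suc m) 1 c) \<le> (1 + 1/c + 1/(c powr \<eta> * \<eta>)) * (c + real (Suc m)) powr \<eta>"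
proof -
  define T where "T = (c + real (Suc m)) powr \<eta>"
  define D where "D = 1/(c powr \<eta> * \<eta>)"
  have t1: "c + real (Suc m) \<ge> 1" using c by simp
  have tp: "T \<ge> 1" unfolding T_def using t1 e by (intro ge_one_powr_ge_zero) auto
  have D0: "D \<ge> 0" unfolding D_def using c e by simp
  have "gen_harm (Suc m) 1 c \<le> 1/c + ln ((c + m)/c)" by (rule harm_bound[OF c])
  also have "ln ((c + m)/c) \<le> ln ((c + real (Suc m)) / c)"
    using c by (subst ln_le_cancel_iff) (auto intro: divide_right_mono)
  also have "ln ((c + real (Suc m)) / c) \<le> ((c + real (Suc m)) / c) powr \<eta> / \<eta>"
    by (rule ln_le_powr) (use c e in auto)
  also have "((c + real (Suc m)) / c) powr \<eta> / \<eta> = T * D"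
    by (simp add: T_def D_def powr_divide)
  finally have H: "gen_harm (Suc m) 1 c \<le> 1/c + T * D" by simp
  have "1/c * 1 \<le> 1/c * T" by (rule mult_left_mono) (use tp c in auto)
  then have "1/c \<le> 1/c * T" by simp
  moreover have "0 \<le> T * D" using tp D0 by simp
  moreover have "0 \<le> 1/c * T" using tp c by simp
  moreover have "(1 + 1/c + D) * T = T + 1/c * T + T * D" by (simp add: algebra_simps)
  ultimately show ?thesis using H tp unfolding T_def[symmetric] D_def[symmetric] by linarith
qed

lemma bound_summable:
  assumes c: "c > 0" and xc: "x < c"
  shows "summable (\<lambda>m. (1 / real (Suc m)) * (\<bar>pochhammer x (Suc m)\<bar> / pochhammer c (Suc m)) *
                        (max 1 (gen_harm (Suc m) 1 c)) ^ r)"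
proof -
  define \<delta> where "\<delta> = c - x"
  have d: "\<delta> > 0" using xc by (simp add: \<delta>_def)
  define \<eta> where "\<eta> = \<delta> / (2 * (real r + 1))"
  have e: "\<eta> > 0" using d by (simp add: \<eta>_def)
  have r\<eta>: "real r * \<eta> \<le> \<delta> / 2"
  proof -
    have "real r * \<eta> = \<delta> / 2 * (real r / (real r + 1))" by (simp add: \<eta>_def field_simps)
    also have "\<dots> \<le> \<delta> / 2 * 1" using d by (intro mult_left_mono) auto
    finally show ?thesis by simp
  qed
  obtain A K where AK: "\<forall>n\<ge>K. \<bar>pochhammer x n\<bar> / pochhammer c n \<le> A * (c + n) powr (x - c)"
    using poch_ratio_bound[OF c xc] by blast
  define B where "B = 1 + 1/c + 1/(c powr \<eta> * \<eta>)"
  have B0: "B \<ge> 0" unfolding B_def using c e by simp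
  define g where "g m = A * B ^ r * real (Suc m) powr (-1 - \<delta>/2)" for m
  let ?f = "\<lambda>m. (1 / real (Suc m)) * (\<bar>pochhammer x (Suc m)\<bar> / pochhammer c (Suc m)) *
                        (max 1 (gen_harm (Suc m) 1 c)) ^ r"
  have ev: "eventually (\<lambda>m. norm (?f m) \<le> g m) sequentially"
    unfolding eventually_sequentially
  proof (intro exI[of _ K] allI impI)
    fix m assume m: "K \<le> m"
    define t where "t = c + real (Suc m)"
    define n where "n = real (Suc m)"
    have t1: "t \<ge> 1" using c by (simp add: t_def)
    have tn: "n \<le> t" using c by (simp add: t_def n_def)
    have n0: "n > 0" by (simp add: n_def)
    have pc: "pochhammer c (Suc m) > 0" using c by (rule poch_pos)
    have R: "\<bar>pochhammer x (Suc m)\<bar> / pochhammer c (Suc m) \<le> A * t powr (-\<delta>)"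
    proof -
      have "Suc m \<ge> K" using m by simp
      with AK have "\<bar>pochhammer x (Suc m)\<bar> / pochhammer c (Suc m) \<le> A * (c + real (Suc m)) powr (x - c)"
        by blast
      moreover have "x - c = - \<delta>" by (simp add: \<delta>_def)
      ultimately show ?thesis by (simp only: t_def)
    qed
    have R0: "0 \<le> \<bar>pochhammer x (Suc m)\<bar> / pochhammer c (Suc m)" using pc by simp
    have A0: "A \<ge> 0"
    proof -
      have "0 \<le> A * t powr (-\<delta>)" using R R0 by linarith
      moreover have "t powr (-\<delta>) > 0" using t1 by simp
      ultimately show ?thesis by (simp add: zero_le_mult_iff)
    qed
    have Mb: "(max 1 (gen_harm (Suc m) 1 c)) ^ r \<le> (B * t powr \<eta>) ^ r"
      by (intro power_mono) (use harm_max_bound[OF c e, of m] in \<open>auto simp: B_def t_def\<close>)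
    have "norm (?f m) = (1/n) * (\<bar>pochhammer x (Suc m)\<bar> / pochhammer c (Suc m)) *
                        (max 1 (gen_harm (Suc m) 1 c)) ^ r"
      using pc by (simp add: n_def)
    also have "\<dots> \<le> (1/n) * (A * t powr (-\<delta>)) * (B * t powr \<eta>) ^ r"
      by (intro mult_mono mult_left_mono R Mb) (use n0 R R0 in auto)
    also have "\<dots> = A * B ^ r * ((1/n) * t powr (real r * \<eta> - \<delta>))"
    proof -
      have "(t powr \<eta>) ^ r = t powr (real r * \<eta>)" using t1 by (simp add: powr_power)
      moreover have "t powr (-\<delta>) * t powr (real r * \<eta>) = t powr (real r * \<eta> - \<delta>)"
        by (simp add: powr_add[symmetric])
      ultimately show ?thesis by (simp add: power_mult_distrib algebra_simps)
    qed
    also have "\<dots> \<le> A * B ^ r * ((1/n) * t powr (- \<delta> / 2))"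
      by (intro mult_left_mono powr_mono t1) (use r\<eta> n0 A0 B0 in auto)
    also have "\<dots> \<le> A * B ^ r * ((1/n) * n powr (- \<delta> / 2))"
      by (intro mult_left_mono powr_mono2') (use d n0 tn A0 B0 in auto)
    also have "(1/n) * n powr (- \<delta> / 2) = n powr (-1 - \<delta>/2)"
    proof -
      have ex: "-1 - \<delta>/2 = (-1) + (- \<delta> / 2)" by simp
      have "n powr (-1 - \<delta>/2) = n powr (-1) * n powr (- \<delta> / 2)" by (simp only: ex powr_add)
      also have "n powr (-1) = 1/n" using n0 by (simp add: powr_minus_divide)
      finally show ?thesis by simp
    qed
    finally show "norm (?f m) \<le> g m" by (simp add: g_def n_def)
  qed
  have "summable (\<lambda>m. real m powr (-1 - \<delta>/2))" using d by (simp add: summable_real_powr_iff)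
  then have "summable (\<lambda>m. real (Suc m) powr (-1 - \<delta>/2))" by (subst summable_Suc_iff)
  then have "summable g" unfolding g_def by (rule summable_mult)
  then show ?thesis by (rule summable_comparison_test_ev[OF ev])
qed


definition U :: "real \<Rightarrow> real \<Rightarrow> nat \<Rightarrow> real" where
  "U x a m = pochhammer x (Suc m) / (real (Suc m) * pochhammer a (Suc m))"

lemma tm0_U: "tm x 0 (Suc m) a = - U x a m"
  by (simp add: tm_yv bell_0 U_def)

lemma U_abs_summable:
  assumes a: "a > 0" and xa: "x < a"
  shows "summable (\<lambda>m. \<bar>U x a m\<bar>)"
proof -
  have s: "summable (\<lambda>m. (1 / real (Suc m)) * (\<bar>pochhammer x (Suc m)\<bar> / pochhammer a (Suc m)) *
                        (max 1 (gen_harm (Suc m) 1 a)) ^ 0)"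
    by (rule bound_summable[OF a xa])
  have "(\<lambda>m. (1 / real (Suc m)) * (\<bar>pochhammer x (Suc m)\<bar> / pochhammer a (Suc m)) *
                        (max 1 (gen_harm (Suc m) 1 a)) ^ 0) = (\<lambda>m. \<bar>U x a m\<bar>)"
  proof
    fix m
    have "pochhammer a (Suc m) > 0" using a by (rule poch_pos)
    then show "(1 / real (Suc m)) * (\<bar>pochhammer x (Suc m)\<bar> / pochhammer a (Suc m)) *
                        (max 1 (gen_harm (Suc m) 1 a)) ^ 0 = \<bar>U x a m\<bar>"
      by (simp add: U_def abs_mult field_simps del: of_nat_Suc)
  qed
  with s show ?thesis by simp
qed

lemma U_summable: "a > 0 \<Longrightarrow> x < a \<Longrightarrow> summable (U x a)"
  using U_abs_summable summable_rabs_cancel by blast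

lemma poch_ratio_tendsto:
  fixes a x :: real
  assumes a: "a > 0" and xa: "x < a"
  shows "(\<lambda>n. pochhammer x n / pochhammer a n) \<longlonglongrightarrow> 0"
proof -
  obtain A K where AK: "\<forall>n\<ge>K. \<bar>pochhammer x n\<bar> / pochhammer a n \<le> A * (a + n) powr (x - a)"
    using poch_ratio_bound[OF a xa] by blast
  have "(\<lambda>n. A * (a + real n) powr (x - a)) \<longlonglongrightarrow> A * 0"
    by (intro tendsto_intros tendsto_neg_powr filterlim_tendsto_add_at_top[OF tendsto_const filterlim_real_sequentially])
       (use xa in simp)
  then have lim: "(\<lambda>n. A * (a + real n) powr (x - a)) \<longlonglongrightarrow> 0" by simp
  show ?thesis
  proof (rule Lim_null_comparison[OF _ lim])
    show "\<forall>\<^sub>F n in sequentially. norm (pochhammer x n / pochhammer a n) \<le> A * (a + real n) powr (x - a)"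
      unfolding eventually_sequentially
    proof (intro exI[of _ K] allI impI)
      fix n assume "K \<le> n"
      moreover have "pochhammer a n > 0" using a by (rule poch_pos)
      ultimately show "norm (pochhammer x n / pochhammer a n) \<le> A * (a + real n) powr (x - a)"
        using AK by simp
    qed
  qed
qed

lemma V_sums:
  fixes a x :: real
  assumes a: "a > 0" and xa: "x < a"
  shows "(\<lambda>n. pochhammer x n / pochhammer (a + 1) n) sums (a / (a - x))"
proof -
  define w where "w n = a * (pochhammer x n / pochhammer a n)" for n
  have step: "w (Suc n) - w n = (x - a) * (pochhammer x n / pochhammer (a + 1) n)" for n
  proof -
    have P: "pochhammer a n > 0" using a by (rule poch_pos)
    have Q: "pochhammer (a + 1) n > 0" using a by (intro poch_pos) simp
    have key: "a * pochhammer (a + 1) n = (a + n) * pochhammer a n"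
      using pochhammer_rec[of a n] pochhammer_rec'[of a n] by simp
    have an: "a + real n > 0" using a by simp
    have Qe: "pochhammer (a + 1) n = (a + real n) * pochhammer a n / a" using key a by (simp add: field_simps)
    have g1: "a' * (u / (s * P')) = u / (s * P' / a')" if "a' > 0" "s > 0" "P' > 0" for a' s P' u :: real
      using that by (simp add: field_simps)
    have g2: "a' * (u / P') = u * s / (s * P' / a')" if "a' > 0" "s > 0" "P' > 0" for a' s P' u :: real
      using that by (simp add: field_simps)
    have "w (Suc n) = a * (pochhammer x n * (x + n) / ((a + n) * pochhammer a n))"
      by (simp add: w_def pochhammer_rec' mult_ac)
    also have "\<dots> = pochhammer x n * (x + n) / pochhammer (a + 1) n"
      unfolding Qe by (rule g1) (use a an P in auto)
    finally have ws: "w (Suc n) = pochhammer x n * (x + n) / pochhammer (a + 1) n" .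
    have wn: "w n = pochhammer x n * (a + n) / pochhammer (a + 1) n"
      unfolding Qe w_def by (rule g2) (use a an P in auto)
    show ?thesis unfolding ws wn using Q by (simp add: field_simps)
  qed
  have "w \<longlonglongrightarrow> a * 0" unfolding w_def by (intro tendsto_intros poch_ratio_tendsto a xa)
  then have "(\<lambda>n. w (Suc n) - w n) sums (0 - w 0)" by (intro telescope_sums) simp
  moreover have w0: "w 0 = a" by (simp add: w_def)
  ultimately have "(\<lambda>n. (x - a) * (pochhammer x n / pochhammer (a + 1) n)) sums (- a)"
    unfolding step by simp
  then have "(\<lambda>n. (1 / (x - a)) * ((x - a) * (pochhammer x n / pochhammer (a + 1) n))) sums (1 / (x - a) * (- a))"
    by (rule sums_mult)
  moreover have "1 / (x - a) * (- a) = a / (a - x)" using xa by (simp add: field_simps)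
  ultimately show ?thesis using xa by simp
qed

lemma U_diff:
  assumes a: "a > 0" and xa: "x < a"
  shows "U x a m - U x (a + 1) m = (1 / a) * (pochhammer x (Suc m) / pochhammer (a + 1) (Suc m))"
proof -
  let ?n = "Suc m"
  have P: "pochhammer a ?n > 0" using a by (rule poch_pos)
  have Q: "pochhammer (a + 1) ?n > 0" using a by (intro poch_pos) simp
  have k1: "pochhammer a (Suc ?n) = a * pochhammer (a + 1) ?n" by (rule pochhammer_rec)
  have k2: "pochhammer a (Suc ?n) = (a + real ?n) * pochhammer a ?n" by (simp add: pochhammer_rec')
  have key: "a * pochhammer (a + 1) ?n = (a + real ?n) * pochhammer a ?n" using k1 k2 by simp
  have an: "a + real ?n > 0" using a by simp
  have Qe: "pochhammer (a + 1) ?n = (a + real ?n) * pochhammer a ?n / a" using key a by (simp add: field_simps)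
  have n0: "real ?n > 0" by simp
  have g: "p / (k * P') - p / (k * ((b + k) * P' / b)) = 1 / b * (p / ((b + k) * P' / b))"
    if "b > 0" "k > 0" "P' > 0" for p k P' b :: real
  proof -
    have h1: "P' * b + P' * k \<noteq> 0" using that by (smt (verit) mult_pos_pos)
    have h2: "P' * (b * k) + P' * (k * k) \<noteq> 0" using that by (smt (verit) mult_pos_pos)
    have h3: "b + k \<noteq> 0" using that by simp
    show ?thesis using that h1 h2 h3 by (simp add: field_simps)
  qed
  show ?thesis unfolding U_def Qe by (rule g) (use a n0 P in auto)
qed

definition Fs :: "real \<Rightarrow> real \<Rightarrow> real" where "Fs x a = suminf (U x a)"

lemma Fs_step:
  assumes a: "a > 0" and xa: "x < a"
  shows "Fs x a - Fs x (a + 1) = 1 / (a - x) - 1 / a"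
proof -
  have "(\<lambda>m. pochhammer x (Suc m) / pochhammer (a + 1) (Suc m)) sums (a / (a - x) - 1)"
    using V_sums[OF a xa] by (subst sums_Suc_iff) simp
  then have "(\<lambda>m. (1 / a) * (pochhammer x (Suc m) / pochhammer (a + 1) (Suc m))) sums ((1 / a) * (a / (a - x) - 1))"
    by (rule sums_mult)
  then have s1: "(\<lambda>m. U x a m - U x (a + 1) m) sums ((1 / a) * (a / (a - x) - 1))"
    using U_diff[OF a xa] by simp
  have s2: "(\<lambda>m. U x a m - U x (a + 1) m) sums (Fs x a - Fs x (a + 1))"
    unfolding Fs_def using a xa by (intro sums_diff summable_sums U_summable) auto
  have "Fs x a - Fs x (a + 1) = (1 / a) * (a / (a - x) - 1)" using sums_unique2[OF s2 s1] .
  also have "\<dots> = 1 / (a - x) - 1 / a" using a xa by (simp add: field_simps)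
  finally show ?thesis .
qed

lemma Fs_iter:
  assumes a: "a > 0" and xa: "x < a"
  shows "Fs x a - Fs x (a + real N) = (\<Sum>k<N. 1 / (a - x + real k) - 1 / (a + real k))"
proof (induction N)
  case 0 then show ?case by simp
next
  case (Suc N)
  have "Fs x (a + real N) - Fs x (a + real N + 1) = 1 / (a + real N - x) - 1 / (a + real N)"
    by (rule Fs_step) (use a xa in auto)
  moreover have "a + real N + 1 = a + real (Suc N)" "a + real N - x = a - x + real N" by simp_all
  ultimately have st: "Fs x (a + real N) - Fs x (a + real (Suc N)) = 1 / (a - x + real N) - 1 / (a + real N)"
    by simp
  show ?case using Suc.IH st by (simp only: sum.lessThan_Suc)
qed

lemma Fs_tendsto:
  assumes a: "a > 0" and xa: "x < a"
  shows "(\<lambda>N. Fs x (a + real N)) \<longlonglongrightarrow> 0"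
proof -
  define S where "S = (\<Sum>m. \<bar>U x a m\<bar>)"
  have bnd: "\<bar>U x (a + real N) m\<bar> \<le> a / (a + real N) * \<bar>U x a m\<bar>" for N m
  proof -
    have aN: "a + real N > 0" using a by simp
    have k1: "pochhammer a (Suc m) = a * pochhammer (a + 1) m" by (rule pochhammer_rec)
    have k2: "pochhammer (a + real N) (Suc m) = (a + real N) * pochhammer (a + real N + 1) m"
      by (rule pochhammer_rec)
    have m1: "pochhammer (a + 1) m \<le> pochhammer (a + real N + 1) m" using a by (intro poch_mono) auto
    have p1: "pochhammer (a + 1) m > 0" using a by (intro poch_pos) simp
    have p2: "pochhammer (a + real N + 1) m > 0" using a by (intro poch_pos) simp
    have "\<bar>U x (a + real N) m\<bar> = \<bar>pochhammer x (Suc m)\<bar> / (real (Suc m) * ((a + real N) * pochhammer (a + real N + 1) m))"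
      using aN p1 m1 by (simp add: U_def k2 abs_mult abs_divide)
    also have "\<dots> \<le> \<bar>pochhammer x (Suc m)\<bar> / (real (Suc m) * ((a + real N) * pochhammer (a + 1) m))"
      by (intro divide_left_mono mult_left_mono m1 mult_pos_pos) (use aN p1 p2 in auto)
    also have "\<dots> = a / (a + real N) * \<bar>U x a m\<bar>"
    proof -
      have g: "p / (k * (b * q)) = a' / b * (p / (k * (a' * q)))"
        if "a' > 0" "b > 0" "q > 0" "k > 0" for p k b q a' :: real
        using that by (simp add: field_simps)
      have "\<bar>U x a m\<bar> = \<bar>pochhammer x (Suc m)\<bar> / (real (Suc m) * (a * pochhammer (a + 1) m))"
        using a p1 by (simp add: U_def k1 abs_mult abs_divide)
      then show ?thesis by (simp only:) (rule g, use a aN p1 in auto)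
    qed
    finally show ?thesis .
  qed
  have lim: "(\<lambda>N. a * S * inverse (a + real N)) \<longlonglongrightarrow> a * S * 0"
    by (intro tendsto_intros tendsto_inverse_0_at_top
          filterlim_tendsto_add_at_top[OF tendsto_const filterlim_real_sequentially])
  show ?thesis
  proof (rule Lim_null_comparison[OF _ lim[simplified]])
    show "\<forall>\<^sub>F N in sequentially. norm (Fs x (a + real N)) \<le> a * S * inverse (a + real N)"
    proof (intro always_eventually allI)
      fix N
      have aN: "a + real N > 0" "x < a + real N" using a xa by auto
      have sa: "summable (\<lambda>m. \<bar>U x (a + real N) m\<bar>)" by (rule U_abs_summable[OF aN])
      have sb: "summable (\<lambda>m. a / (a + real N) * \<bar>U x a m\<bar>)"
        by (intro summable_mult U_abs_summable a xa)
      have "norm (Fs x (a + real N)) \<le> (\<Sum>m. \<bar>U x (a + real N) m\<bar>)"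
        unfolding Fs_def real_norm_def by (rule summable_rabs[OF sa])
      also have "\<dots> \<le> (\<Sum>m. a / (a + real N) * \<bar>U x a m\<bar>)"
        by (intro suminf_le sa sb) (use bnd in simp)
      also have "\<dots> = a / (a + real N) * S" unfolding S_def
        by (rule suminf_mult) (rule U_abs_summable[OF a xa])
      finally show "norm (Fs x (a + real N)) \<le> a * S * inverse (a + real N)"
        by (simp add: divide_inverse mult_ac)
    qed
  qed
qed

lemma digamma_diff_sums:
  assumes a: "a > 0" and xa: "x < a"
  shows "(\<lambda>k. 1 / (a - x + real k) - 1 / (a + real k)) sums (Digamma a - Digamma (a - x))"
proof -
  have h1: "(\<lambda>k. inverse (of_nat (Suc k)) - inverse (a + of_nat k)) sums (Digamma a + euler_mascheroni)"
    using summable_Digamma[of a] a by (simp add: Digamma_def summable_sums)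
  have h2: "(\<lambda>k. inverse (of_nat (Suc k)) - inverse ((a - x) + of_nat k)) sums (Digamma (a - x) + euler_mascheroni)"
    using summable_Digamma[of "a - x"] xa by (simp add: Digamma_def summable_sums)
  from sums_diff[OF h1 h2] show ?thesis by (simp add: divide_inverse)
qed

lemma base_case:
  assumes a: "a > 0" and xa: "x < a"
  shows "(\<lambda>m. tm x 0 (Suc m) a) sums (Polygamma 0 (a - x) - Polygamma 0 a)"
proof -
  have l1: "(\<lambda>N. Fs x a - Fs x (a + real N)) \<longlonglongrightarrow> Fs x a - 0"
    by (intro tendsto_intros Fs_tendsto a xa)
  have l2: "(\<lambda>N. Fs x a - Fs x (a + real N)) \<longlonglongrightarrow> Digamma a - Digamma (a - x)"
    using digamma_diff_sums[OF a xa] unfolding sums_def Fs_iter[OF a xa] .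
  have "Fs x a = Digamma a - Digamma (a - x)" using LIMSEQ_unique[OF l1 l2] by simp
  moreover have "U x a sums Fs x a" unfolding Fs_def by (intro summable_sums U_summable a xa)
  ultimately have "(\<lambda>m. - U x a m) sums (- (Digamma a - Digamma (a - x)))"
    by (intro sums_minus) simp
  then show ?thesis by (simp add: tm0_U)
qed


lemma unif_conv:
  assumes c: "c > 0" and xc: "x < c"
  shows "uniformly_convergent_on {c<..} (\<lambda>N a. \<Sum>i<N. tm x r (Suc i) a)"
proof -
  let ?M = "\<lambda>m. (1 / real (Suc m)) * (\<bar>pochhammer x (Suc m)\<bar> / pochhammer c (Suc m)) *
                 ((max 1 (gen_harm (Suc m) 1 c)) ^ r * bell_Y r (\<beta>c c))"
  have sM: "summable ?M"
    using summable_mult2[OF bound_summable[OF c xc, of r], of "bell_Y r (\<beta>c c)"] by (simp add: mult.assoc)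
  have "uniform_limit {c<..} (\<lambda>N a. \<Sum>i<N. tm x r (Suc i) a) (\<lambda>a. \<Sum>i. tm x r (Suc i) a) sequentially"
  proof (rule Weierstrass_m_test_ev[OF _ sM])
    show "\<forall>\<^sub>F n in sequentially. \<forall>a\<in>{c<..}. norm (tm x r (Suc n) a) \<le> ?M n"
    proof (intro always_eventually allI ballI)
      fix n a assume "a \<in> {c<..}"
      then have "c \<le> a" by simp
      from tm_bound[OF c this, of x r "Suc n"]
      show "norm (tm x r (Suc n) a) \<le> ?M n" by simp
    qed
  qed
  then show ?thesis unfolding uniformly_convergent_on_def by blast
qed

lemma main_sums:
  fixes x :: real
  shows "\<forall>a. 0 < a \<and> x < a \<longrightarrow> (\<lambda>m. tm x r (Suc m) a) sums (Polygamma r (a - x) - Polygamma r a)"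
proof (induction r)
  case 0 then show ?case using base_case by blast
next
  case (Suc r)
  show ?case
  proof (intro allI impI)
    fix a assume aa: "0 < a \<and> x < a"
    define c where "c = (max 0 x + a) / 2"
    have c0: "c > 0" "x < c" "c < a" using aa by (auto simp: c_def)
    let ?S = "{c<..}"
    have der: "((\<lambda>a. tm x r (Suc n) a) has_field_derivative tm x (Suc r) (Suc n) y) (at y within ?S)"
      if "y \<in> ?S" for n y
    proof -
      have "y > 0" using that c0 by simp
      then show ?thesis by (rule has_field_derivative_at_within[OF tm_deriv])
    qed
    have uc: "uniformly_convergent_on ?S (\<lambda>N a. \<Sum>i<N. tm x (Suc r) (Suc i) a)"
      by (rule unif_conv) (use c0 in auto)
    have aS: "a \<in> ?S" using c0 by simp
    have aint: "a \<in> interior ?S" using aS by (simp add: interior_open)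
    have sum0: "summable (\<lambda>n. tm x r (Suc n) a)" using Suc.IH aa by (auto simp: sums_iff)
    have D: "((\<lambda>y. \<Sum>n. tm x r (Suc n) y) has_field_derivative (\<Sum>n. tm x (Suc r) (Suc n) a)) (at a)"
      by (rule has_field_derivative_series'(2)[OF convex_real_interval(3) der uc aS sum0 aint])
    have ev: "eventually (\<lambda>y. (\<Sum>n. tm x r (Suc n) y) = Polygamma r (y - x) - Polygamma r y) (nhds a)"
    proof (rule eventually_nhds_in_open[THEN eventually_mono])
      show "open ?S" by simp
      show "a \<in> ?S" by (rule aS)
      fix y assume "y \<in> ?S"
      then have "0 < y \<and> x < y" using c0 by auto
      then show "(\<Sum>n. tm x r (Suc n) y) = Polygamma r (y - x) - Polygamma r y"
        using Suc.IH by (auto simp: sums_iff)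
    qed
    have D2: "((\<lambda>y. Polygamma r (y - x) - Polygamma r y) has_field_derivative (\<Sum>n. tm x (Suc r) (Suc n) a)) (at a)"
      using D DERIV_cong_ev[OF refl ev refl] by simp
    have nz1: "a - x \<notin> \<int>\<^sub>\<le>\<^sub>0" using aa by (auto dest: nonpos_Ints_nonpos)
    have nz2: "a \<notin> \<int>\<^sub>\<le>\<^sub>0" using aa by (auto dest: nonpos_Ints_nonpos)
    have p1: "((\<lambda>y. Polygamma r (y - x)) has_field_derivative Polygamma (Suc r) (a - x) * (1 - 0)) (at a)"
    proof -
      have d1: "(Polygamma r has_field_derivative Polygamma (Suc r) (a - x)) (at (a - x))"
        by (rule has_field_derivative_Polygamma[OF nz1])
      have d2: "((\<lambda>y. y - x) has_field_derivative 1 - 0) (at a)"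
        by (intro DERIV_diff DERIV_ident DERIV_const)
      show ?thesis using DERIV_chain2[where f="Polygamma r" and g="\<lambda>y. y - x" and x=a, OF d1 d2] by simp
    qed
    have D3: "((\<lambda>y. Polygamma r (y - x) - Polygamma r y) has_field_derivative
                (Polygamma (Suc r) (a - x) * (1 - 0) - Polygamma (Suc r) a)) (at a)"
      by (intro DERIV_diff p1 has_field_derivative_Polygamma[OF nz2])
    have eq: "(\<Sum>n. tm x (Suc r) (Suc n) a) = Polygamma (Suc r) (a - x) - Polygamma (Suc r) a"
      using DERIV_unique[OF D2 D3] by simp
    have "convergent (\<lambda>N. \<Sum>i<N. tm x (Suc r) (Suc i) a)"
      by (rule uniformly_convergent_imp_convergent[OF uc aS])
    then have "summable (\<lambda>n. tm x (Suc r) (Suc n) a)" by (simp add: summable_iff_convergent)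
    then show "(\<lambda>m. tm x (Suc r) (Suc m) a) sums (Polygamma (Suc r) (a - x) - Polygamma (Suc r) a)"
      using eq by (simp add: sums_iff)
  qed
qed

theorem mainTheorem13:
  fixes a x :: real and r :: nat
  assumes "a > 0" and "x < a"
  shows "(\<lambda>m. let n = Suc m in
            - (1 / real n) * (pochhammer x n / pochhammer a n) *
              bell_Y r (\<lambda>j. (-1) ^ j * fact (j - 1) * gen_harm n j a))
         sums (Polygamma r (a - x) - Polygamma r a)"
proof -
  have "(\<lambda>m. let n = Suc m in
            - (1 / real n) * (pochhammer x n / pochhammer a n) *
              bell_Y r (\<lambda>j. (-1) ^ j * fact (j - 1) * gen_harm n j a)) = (\<lambda>m. tm x r (Suc m) a)"
    by (simp add: tm_def Let_def)
  then show ?thesis using main_sums[of x r] assms by auto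
qed


end
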